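(* Let $(d_A,d_B)$ be a bipartite degree sequence that has a realization with matching number $\nu_{\min}$ and a realization with matching number $\nu_{\max}$, and let $\nu$ be an integer with $\nu_{\min}\leq\nu\leq\nu_{\max}$. Then $(d_A,d_B)$ has a realization with matching number $\nu$.
   Context: All graphs are finite, simple and undirected. For a bipartite graph with fixed partite sets $A,B$, its bipartite degree sequence is the pair of nonincreasing sequences of degrees of vertices in $A$ and in $B$; a pair of sequences is a bipartite degree sequence if it arises this way from some bipartite graph, called a realization. The matching number is the maximum size of a matching. *)

theory Defs
  imports Main
begin

text \<open>A bipartite graph with fixed partite sets A = {0..<m} and B = {0..<n} is
represented by its edge set E, a set of pairs (a, b) with a < m and b < n
(an edge joins vertex a of A to vertex b of B). Simplicity is automatic.\<close>

definition bip_graph :: "nat \<Rightarrow> nat \<Rightarrow> (nat \<times> nat) set \<Rightarrow> bool" where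
  "bip_graph m n E \<longleftrightarrow> E \<subseteq> {..<m} \<times> {..<n}"

definition degA :: "(nat \<times> nat) set \<Rightarrow> nat \<Rightarrow> nat" where
  "degA E a = card {b. (a, b) \<in> E}"

definition degB :: "(nat \<times> nat) set \<Rightarrow> nat \<Rightarrow> nat" where
  "degB E b = card {a. (a, b) \<in> E}"

definition realizes :: "nat list \<Rightarrow> nat list \<Rightarrow> (nat \<times> nat) set \<Rightarrow> bool" where
  "realizes dA dB E \<longleftrightarrow> bip_graph (length dA) (length dB) E
     \<and> (\<forall>i < length dA. degA E i = dA ! i)
     \<and> (\<forall>j < length dB. degB E j = dB ! j)"

definition bip_degree_sequence :: "nat list \<Rightarrow> nat list \<Rightarrow> bool" where
  "bip_degree_sequence dA dB \<longleftrightarrow> sorted_wrt (\<ge>) dA \<and> sorted_wrt (\<ge>) dB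
     \<and> (\<exists>E. realizes dA dB E)"

definition is_matching :: "(nat \<times> nat) set \<Rightarrow> (nat \<times> nat) set \<Rightarrow> bool" where
  "is_matching E M \<longleftrightarrow> M \<subseteq> E \<and> inj_on fst M \<and> inj_on snd M"

definition matching_number :: "(nat \<times> nat) set \<Rightarrow> nat" where
  "matching_number E = Max (card ` {M. is_matching E M})"

end

theory Submission
  imports Defs
begin

definition row :: "(nat \<times> nat) set \<Rightarrow> nat \<Rightarrow> nat set" where "row E x = {y. (x,y) \<in> E}"
definition col :: "(nat \<times> nat) set \<Rightarrow> nat \<Rightarrow> nat set" where "col E y = {x. (x,y) \<in> E}"

definition sw :: "(nat\<times>nat) set \<Rightarrow> (nat\<times>nat) set \<Rightarrow> bool" where
"sw E E' \<longleftrightarrow> (\<exists>a a' b b'. a \<noteq> a' \<and> b \<noteq> b' \<and> (a,b)\<in>E \<and> (a',b')\<in>E \<and> (a,b')\<notin>E \<and> (a',b)\<notin>E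
   \<and> E' = E - {(a,b),(a',b')} \<union> {(a,b'),(a',b)})"

lemma sw_sym: "sw E E' \<Longrightarrow> sw E' E"
  unfolding sw_def
proof (elim exE conjE)
  fix a a' b b' assume h: "a\<noteq>a'" "b\<noteq>b'" "(a,b)\<in>E" "(a',b')\<in>E" "(a,b')\<notin>E" "(a',b)\<notin>E"
    "E' = E - {(a,b),(a',b')} \<union> {(a,b'),(a',b)}"
  show "\<exists>a a' b b'. a \<noteq> a' \<and> b \<noteq> b' \<and> (a,b)\<in>E' \<and> (a',b')\<in>E' \<and> (a,b')\<notin>E' \<and> (a',b)\<notin>E'
     \<and> E = E' - {(a,b),(a',b')} \<union> {(a,b'),(a',b)}"
    apply (rule exI[of _ a], rule exI[of _ a'], rule exI[of _ b'], rule exI[of _ b])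
    using h by auto
qed

lemma sw_rtr_sym: "sw\<^sup>*\<^sup>* x y \<Longrightarrow> sw\<^sup>*\<^sup>* y x"
proof (induction rule: rtranclp.induct)
  case (rtrancl_refl a) then show ?case by simp
next
  case (rtrancl_into_rtrancl a b c)
  then show ?case using sw_sym converse_rtranclp_into_rtranclp by metis
qed

lemma card_swap: "finite S \<Longrightarrow> b\<in>S \<Longrightarrow> b'\<notin>S \<Longrightarrow> card (insert b' (S - {b})) = card S"
  proof -
  assume a: "finite S" "b\<in>S" "b'\<notin>S"
  then have "card (insert b' (S - {b})) = Suc (card (S - {b}))" by simp
  also have "\<dots> = card S" using a by (simp add: card_Diff_singleton card_gt_0_iff) (metis Suc_pred card_gt_0_iff empty_iff)
  finally show ?thesis .
qed

lemma degA_row: "degA E a = card (row E a)" by (simp add: degA_def row_def)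
lemma degB_col: "degB E a = card (col E a)" by (simp add: degB_def col_def)

lemma fin_real: "realizes dA dB E \<Longrightarrow> finite E"
  unfolding realizes_def bip_graph_def by (auto intro: finite_subset)

lemma fin_row: "finite E \<Longrightarrow> finite (row E x)"
proof -
  assume "finite E"
  moreover have "row E x \<subseteq> snd ` E" by (force simp: row_def)
  ultimately show ?thesis by (meson finite_imageI finite_subset)
qed

lemma fin_col: "finite E \<Longrightarrow> finite (col E x)"
proof -
  assume "finite E"
  moreover have "col E x \<subseteq> fst ` E" by (force simp: col_def)
  ultimately show ?thesis by (meson finite_imageI finite_subset)
qed

lemma sw_realizes: assumes "sw E E'" and r: "realizes dA dB E" shows "realizes dA dB E'"
proof -
  obtain a a' b b' where h: "a\<noteq>a'" "b\<noteq>b'" "(a,b)\<in>E" "(a',b')\<in>E" "(a,b')\<notin>E" "(a',b)\<notin>E"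
    "E' = E - {(a,b),(a',b')} \<union> {(a,b'),(a',b)}" using assms(1) unfolding sw_def by blast
  have fin: "finite E" using r by (rule fin_real)
  have bg: "bip_graph (length dA) (length dB) E'"
    using r h unfolding realizes_def bip_graph_def by auto
  have ra: "row E' a = insert b' (row E a - {b})" using h by (auto simp: row_def)
  have ra': "row E' a' = insert b (row E a' - {b'})" using h by (auto simp: row_def)
  have ro: "\<And>x. x \<noteq> a \<Longrightarrow> x \<noteq> a' \<Longrightarrow> row E' x = row E x" using h by (auto simp: row_def)
  have cb: "col E' b = insert a' (col E b - {a})" using h by (auto simp: col_def)
  have cb': "col E' b' = insert a (col E b' - {a'})" using h by (auto simp: col_def)
  have co: "\<And>x. x \<noteq> b \<Longrightarrow> x \<noteq> b' \<Longrightarrow> col E' x = col E x" using h by (auto simp: col_def)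
  have dA: "\<And>x. degA E' x = degA E x"
  proof -
    fix x
    show "degA E' x = degA E x"
      unfolding degA_row
      using ra ra' ro card_swap[OF fin_row[OF fin]] h by (cases "x = a"; cases "x = a'") (auto simp: row_def)
  qed
  have dB: "\<And>x. degB E' x = degB E x"
  proof -
    fix x
    show "degB E' x = degB E x"
      unfolding degB_col
      using cb cb' co card_swap[OF fin_col[OF fin]] h by (cases "x = b"; cases "x = b'") (auto simp: col_def)
  qed
  show ?thesis using r bg dA dB unfolding realizes_def by auto
qed

lemma rtr_realizes: "sw\<^sup>*\<^sup>* E E' \<Longrightarrow> realizes dA dB E \<Longrightarrow> realizes dA dB E'"
  by (induction rule: rtranclp.induct) (auto intro: sw_realizes)

lemma matching_fin: "finite E \<Longrightarrow> finite {M. is_matching E M}"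
  by (rule finite_subset[of _ "Pow E"]) (auto simp: is_matching_def)

lemma mn_ge: "finite E \<Longrightarrow> is_matching E M \<Longrightarrow> card M \<le> matching_number E"
  unfolding matching_number_def by (rule Max_ge) (auto simp: matching_fin)

lemma mn_att: "finite E \<Longrightarrow> \<exists>M. is_matching E M \<and> card M = matching_number E"
proof -
  assume f: "finite E"
  have "is_matching E {}" by (simp add: is_matching_def)
  then have "matching_number E \<in> card ` {M. is_matching E M}"
    unfolding matching_number_def using f matching_fin by (intro Max_in) auto
  then show ?thesis by auto
qed

lemma sw_mn: assumes "sw E E'" "finite E" shows "matching_number E \<le> matching_number E' + 1"
proof -
  obtain a a' b b' where h: "a\<noteq>a'" "b\<noteq>b'" "(a,b)\<in>E" "(a',b')\<in>E" "(a,b')\<notin>E" "(a',b)\<notin>E"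
    "E' = E - {(a,b),(a',b')} \<union> {(a,b'),(a',b)}" using assms(1) unfolding sw_def by blast
  have fE': "finite E'" using h(7) assms(2) by simp
  obtain M where M: "is_matching E M" "card M = matching_number E" using mn_att[OF assms(2)] by blast
  have fM: "finite M" using M assms(2) unfolding is_matching_def by (auto intro: finite_subset)
  have ME: "M \<subseteq> E" and if1: "inj_on fst M" and is1: "inj_on snd M" using M unfolding is_matching_def by auto
  have "\<exists>M'. is_matching E' M' \<and> card M \<le> card M' + 1"
  proof (cases "(a,b) \<in> M \<and> (a',b') \<in> M")
    case True
    define M' where "M' = M - {(a,b),(a',b')} \<union> {(a,b'),(a',b)}"
    have f1: "\<And>p. p\<in>M \<Longrightarrow> fst p = a \<Longrightarrow> p = (a,b)" using True if1 by (metis fst_conv inj_onD)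
    have f2: "\<And>p. p\<in>M \<Longrightarrow> fst p = a' \<Longrightarrow> p = (a',b')" using True if1 by (metis fst_conv inj_onD)
    have s1: "\<And>p. p\<in>M \<Longrightarrow> snd p = b \<Longrightarrow> p = (a,b)" using True is1 by (metis snd_conv inj_onD)
    have s2: "\<And>p. p\<in>M \<Longrightarrow> snd p = b' \<Longrightarrow> p = (a',b')" using True is1 by (metis snd_conv inj_onD)
    have sub: "M' \<subseteq> E'" using ME h unfolding M'_def by auto
    have nx: "\<And>p. p \<in> M - {(a,b),(a',b')} \<Longrightarrow> fst p \<noteq> a \<and> fst p \<noteq> a' \<and> snd p \<noteq> b \<and> snd p \<noteq> b'"
      using f1 f2 s1 s2 by blast
    have i1: "inj_on fst M'" unfolding M'_def inj_on_Un
    proof (intro conjI)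
      show "inj_on fst (M - {(a, b), (a', b')})" using if1 by (rule inj_on_subset) auto
      show "inj_on fst {(a, b'), (a', b)}" using h(1) by simp
      show "fst ` (M - {(a, b), (a', b')} - {(a, b'), (a', b)}) \<inter> fst ` ({(a, b'), (a', b)} - (M - {(a, b), (a', b')})) = {}"
        using nx by fastforce
    qed
    have i2: "inj_on snd M'" unfolding M'_def inj_on_Un
    proof (intro conjI)
      show "inj_on snd (M - {(a, b), (a', b')})" using is1 by (rule inj_on_subset) auto
      show "inj_on snd {(a, b'), (a', b)}" using h(2) by simp
      show "snd ` (M - {(a, b), (a', b')} - {(a, b'), (a', b)}) \<inter> snd ` ({(a, b'), (a', b)} - (M - {(a, b), (a', b')})) = {}"
        using nx by fastforce
    qed
    have c1: "card (M - {(a,b),(a',b')}) = card M - 2"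
      using True fM h(1) by (subst card_Diff_subset) auto
    have c2: "card M \<ge> 2"
    proof -
      have "card {(a,b),(a',b')} \<le> card M" using True fM by (intro card_mono) auto
      then show ?thesis using h(1) by simp
    qed
    have "card M' = card (M - {(a,b),(a',b')}) + card {(a,b'),(a',b)}"
      unfolding M'_def using fM h ME by (intro card_Un_disjoint) auto
    then have "card M' = card M" using c1 c2 h(1) by simp
    then show ?thesis using sub i1 i2 unfolding is_matching_def by (intro exI[of _ M']) auto
  next
    case False
    define M' where "M' = M - {(a,b),(a',b')}"
    have sub: "M' \<subseteq> E'" using ME h unfolding M'_def by auto
    have i: "inj_on fst M'" "inj_on snd M'" using if1 is1 unfolding M'_def by (auto intro: inj_on_subset)
    obtain x where "M \<subseteq> insert x M'" using False unfolding M'_def by auto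
    then have "card M \<le> card (insert x M')" using fM by (intro card_mono) (auto simp: M'_def)
    also have "\<dots> \<le> card M' + 1" using fM by (simp add: card_insert_if M'_def)
    finally show ?thesis using sub i unfolding is_matching_def by (intro exI[of _ M']) auto
  qed
  then obtain M' where "is_matching E' M'" "card M \<le> card M' + 1" by blast
  then show ?thesis using mn_ge[OF fE'] M(2) by (metis add_le_mono1 le_trans)
qed

abbreviation D :: "nat set \<Rightarrow> nat set \<Rightarrow> nat set" where "D A B \<equiv> (A - B) \<union> (B - A)"

lemma card_part: "finite A \<Longrightarrow> card A = card (A - P) + card (A \<inter> P)"
  by (metis Int_Diff_disjoint Un_Diff_Int card_Un_disjoint finite_Diff finite_Int inf_commute)

lemma step:
  assumes r1: "realizes dA dB E1" and r2: "realizes dA dB E2"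
    and agr: "\<forall>x<k. row E1 x = row E2 x" and km: "k < length dA" and ne: "row E1 k \<noteq> row E2 k"
  shows "(\<exists>E1'. sw E1 E1' \<and> (\<forall>x<k. row E1' x = row E2 x) \<and> card (D (row E1' k) (row E2 k)) < card (D (row E1 k) (row E2 k)))
       \<or> (\<exists>E2'. sw E2 E2' \<and> (\<forall>x<k. row E1 x = row E2' x) \<and> card (D (row E1 k) (row E2' k)) < card (D (row E1 k) (row E2 k)))"
proof -
  have f1: "finite E1" and f2: "finite E2" using r1 r2 by (auto intro: fin_real)
  have c12: "card (row E1 k) = card (row E2 k)" using r1 r2 km unfolding realizes_def degA_row by auto
  have fr1: "finite (row E1 k)" and fr2: "finite (row E2 k)" using f1 f2 by (auto intro: fin_row)
  obtain b where b: "b \<in> row E1 k" "b \<notin> row E2 k"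
  proof -
    have "\<not> row E1 k \<subseteq> row E2 k" using card_subset_eq[OF fr2 _ c12] ne by blast
    then show ?thesis using that by blast
  qed
  obtain b' where b': "b' \<in> row E2 k" "b' \<notin> row E1 k"
  proof -
    have "\<not> row E2 k \<subseteq> row E1 k" using card_subset_eq[OF fr1 _ c12[symmetric]] ne by blast
    then show ?thesis using that by blast
  qed
  have bb: "b \<noteq> b'" using b b' by blast
  have fD: "finite (D (row E1 k) (row E2 k))" using fr1 fr2 by simp
  show ?thesis
  proof (cases "\<exists>a'. k < a' \<and> (a',b)\<in>E2 \<and> (a',b')\<notin>E2")
    case True
    then obtain a' where a': "k < a'" "(a',b)\<in>E2" "(a',b')\<notin>E2" by blast
    define E2' where "E2' = E2 - {(k,b'),(a',b)} \<union> {(k,b),(a',b')}"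
    have sw: "sw E2 E2'" unfolding sw_def E2'_def
      using a' b b' bb by (intro exI[of _ k] exI[of _ a'] exI[of _ b'] exI[of _ b]) (auto simp: row_def)
    have rows: "\<forall>x<k. row E1 x = row E2' x" using agr a'(1) by (auto simp: row_def E2'_def)
    have rk: "row E2' k = insert b (row E2 k - {b'})" using a'(1) by (auto simp: row_def E2'_def)
    have "D (row E1 k) (row E2' k) = D (row E1 k) (row E2 k) - {b, b'}" using rk b b' by auto
    moreover have "b \<in> D (row E1 k) (row E2 k)" using b by auto
    ultimately have "card (D (row E1 k) (row E2' k)) < card (D (row E1 k) (row E2 k))"
      using fD by (metis Diff_iff Diff_subset insertI1 psubsetI psubset_card_mono)
    then show ?thesis using sw rows by blast
  next
    case nA: False
    show ?thesis
    proof (cases "\<exists>a'. k < a' \<and> (a',b')\<in>E1 \<and> (a',b)\<notin>E1")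
      case True
      then obtain a' where a': "k < a'" "(a',b')\<in>E1" "(a',b)\<notin>E1" by blast
      define E1' where "E1' = E1 - {(k,b),(a',b')} \<union> {(k,b'),(a',b)}"
      have sw: "sw E1 E1'" unfolding sw_def E1'_def
        using a' b b' bb by (intro exI[of _ k] exI[of _ a'] exI[of _ b] exI[of _ b']) (auto simp: row_def)
      have rows: "\<forall>x<k. row E1' x = row E2 x" using agr a'(1) by (auto simp: row_def E1'_def)
      have rk: "row E1' k = insert b' (row E1 k - {b})" using a'(1) by (auto simp: row_def E1'_def)
      have "D (row E1' k) (row E2 k) = D (row E1 k) (row E2 k) - {b, b'}" using rk b b' by auto
      moreover have "b \<in> D (row E1 k) (row E2 k)" using b by auto
      ultimately have "card (D (row E1' k) (row E2 k)) < card (D (row E1 k) (row E2 k))"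
        using fD by (metis Diff_iff Diff_subset insertI1 psubsetI psubset_card_mono)
      then show ?thesis using sw rows by blast
    next
      case nB: False
      define P where "P = {x::nat. x < k}"
      have bn: "b < length dB" "b' < length dB" using b b' r1 r2
        unfolding realizes_def bip_graph_def row_def by auto
      have fc: "\<And>E y. finite E \<Longrightarrow> finite (col E y - P)" by (simp add: fin_col)
      have s1: "col E2 b - P \<subset> col E2 b' - P"
      proof -
        have "col E2 b - P \<subseteq> col E2 b' - P - {k}"
        proof
          fix x assume x: "x \<in> col E2 b - P"
          then have "x \<noteq> k" using b by (auto simp: col_def row_def)
          then show "x \<in> col E2 b' - P - {k}" using x nA by (auto simp: col_def P_def)
        qed
        moreover have "k \<in> col E2 b' - P" using b' by (auto simp: col_def row_def P_def)
        ultimately show ?thesis by blast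
      qed
      have s2: "col E1 b' - P \<subset> col E1 b - P"
      proof -
        have "col E1 b' - P \<subseteq> col E1 b - P - {k}"
        proof
          fix x assume x: "x \<in> col E1 b' - P"
          then have "x \<noteq> k" using b' by (auto simp: col_def row_def)
          then show "x \<in> col E1 b - P - {k}" using x nB by (auto simp: col_def P_def)
        qed
        moreover have "k \<in> col E1 b - P" using b by (auto simp: col_def row_def P_def)
        ultimately show ?thesis by blast
      qed
      have l1: "card (col E2 b - P) < card (col E2 b' - P)" using s1 fc[OF f2] by (rule psubset_card_mono[rotated])
      have l2: "card (col E1 b' - P) < card (col E1 b - P)" using s2 fc[OF f1] by (rule psubset_card_mono[rotated])
      have eqc: "\<And>y. y < length dB \<Longrightarrow> card (col E1 y - P) = card (col E2 y - P)"
      proof -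
        fix y assume y: "y < length dB"
        have "card (col E1 y) = card (col E2 y)" using r1 r2 y unfolding realizes_def degB_col by auto
        moreover have "col E1 y \<inter> P = col E2 y \<inter> P" using agr unfolding P_def col_def row_def by blast
        ultimately show "card (col E1 y - P) = card (col E2 y - P)"
          using card_part[OF fin_col[OF f1], of y P] card_part[OF fin_col[OF f2], of y P] by simp
      qed
      show ?thesis using l1 l2 eqc[OF bn(1)] eqc[OF bn(2)] by simp
    qed
  qed
qed

lemma fix_row:
  "\<forall>E1 E2. card (D (row E1 k) (row E2 k)) = n \<longrightarrow> realizes dA dB E1 \<longrightarrow> realizes dA dB E2 \<longrightarrow>
    (\<forall>x<k. row E1 x = row E2 x) \<longrightarrow> k < length dA \<longrightarrow>
    (\<exists>E1' E2'. sw\<^sup>*\<^sup>* E1 E1' \<and> sw\<^sup>*\<^sup>* E2 E2' \<and> (\<forall>x<Suc k. row E1' x = row E2' x))"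
proof (induction n rule: less_induct)
  case (less n)
  show ?case
  proof (intro allI impI)
    fix E1 E2 assume n: "card (D (row E1 k) (row E2 k)) = n" and r1: "realizes dA dB E1"
      and r2: "realizes dA dB E2" and agr: "\<forall>x<k. row E1 x = row E2 x" and km: "k < length dA"
    show "\<exists>E1' E2'. sw\<^sup>*\<^sup>* E1 E1' \<and> sw\<^sup>*\<^sup>* E2 E2' \<and> (\<forall>x<Suc k. row E1' x = row E2' x)"
    proof (cases "row E1 k = row E2 k")
      case True
      then show ?thesis using agr by (intro exI[of _ E1] exI[of _ E2]) (auto simp: less_Suc_eq)
    next
      case False
      from step[OF r1 r2 agr km False] show ?thesis
      proof
        assume "\<exists>E1'. sw E1 E1' \<and> (\<forall>x<k. row E1' x = row E2 x) \<and> card (D (row E1' k) (row E2 k)) < card (D (row E1 k) (row E2 k))"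
        then obtain E1' where e: "sw E1 E1'" "\<forall>x<k. row E1' x = row E2 x" "card (D (row E1' k) (row E2 k)) < n"
          using n by blast
        have "realizes dA dB E1'" using e(1) r1 by (rule sw_realizes)
        then obtain F1 F2 where F: "sw\<^sup>*\<^sup>* E1' F1" "sw\<^sup>*\<^sup>* E2 F2" "\<forall>x<Suc k. row F1 x = row F2 x"
          using less.IH[OF e(3)] r2 e(2) km by blast
        then show ?thesis using e(1) by (meson converse_rtranclp_into_rtranclp)
      next
        assume "\<exists>E2'. sw E2 E2' \<and> (\<forall>x<k. row E1 x = row E2' x) \<and> card (D (row E1 k) (row E2' k)) < card (D (row E1 k) (row E2 k))"
        then obtain E2' where e: "sw E2 E2'" "\<forall>x<k. row E1 x = row E2' x" "card (D (row E1 k) (row E2' k)) < n"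
          using n by blast
        have "realizes dA dB E2'" using e(1) r2 by (rule sw_realizes)
        then obtain F1 F2 where F: "sw\<^sup>*\<^sup>* E1 F1" "sw\<^sup>*\<^sup>* E2' F2" "\<forall>x<Suc k. row F1 x = row F2 x"
          using less.IH[OF e(3)] r1 e(2) km by blast
        then show ?thesis using e(1) by (meson converse_rtranclp_into_rtranclp)
      qed
    qed
  qed
qed

lemma conn:
  "realizes dA dB E1 \<Longrightarrow> realizes dA dB E2 \<Longrightarrow> \<forall>x<k. row E1 x = row E2 x \<Longrightarrow> sw\<^sup>*\<^sup>* E1 E2"
proof (induction "length dA - k" arbitrary: k E1 E2)
  case 0
  have "E1 = E2"
  proof (intro set_eqI)
    fix p :: "nat \<times> nat"
    obtain x y where p: "p = (x,y)" by (cases p)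
    show "p \<in> E1 \<longleftrightarrow> p \<in> E2"
    proof (cases "x < k")
      case True then show ?thesis using 0(4) p by (auto simp: row_def)
    next
      case False then show ?thesis using 0(1,2,3) p unfolding realizes_def bip_graph_def by auto
    qed
  qed
  then show ?case by simp
next
  case (Suc t)
  have km: "k < length dA" using Suc(2) by simp
  obtain F1 F2 where F: "sw\<^sup>*\<^sup>* E1 F1" "sw\<^sup>*\<^sup>* E2 F2" "\<forall>x<Suc k. row F1 x = row F2 x"
    using fix_row Suc(3,4,5) km by blast
  have "realizes dA dB F1" "realizes dA dB F2" using F Suc(3,4) rtr_realizes by auto
  then have "sw\<^sup>*\<^sup>* F1 F2" using Suc(1)[of "Suc k"] Suc(2) F(3) by simp
  then show ?case using F(1) sw_rtr_sym[OF F(2)] by (meson rtranclp_trans)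
qed

lemma ivt:
  "sw\<^sup>*\<^sup>* E1 E2 \<Longrightarrow> realizes dA dB E1 \<Longrightarrow>
   \<forall>v. min (matching_number E1) (matching_number E2) \<le> v \<and> v \<le> max (matching_number E1) (matching_number E2)
     \<longrightarrow> (\<exists>E. realizes dA dB E \<and> matching_number E = v)"
proof (induction rule: rtranclp_induct)
  case base then show ?case by auto
next
  case (step y z)
  have ry: "realizes dA dB y" using step(1,4) rtr_realizes by blast
  have rz: "realizes dA dB z" using step(2) ry by (rule sw_realizes)
  have d1: "matching_number y \<le> matching_number z + 1" using sw_mn[OF step(2) fin_real[OF ry]] .
  have d2: "matching_number z \<le> matching_number y + 1" using sw_mn[OF sw_sym[OF step(2)] fin_real[OF rz]] .
  have IH: "\<forall>v. min (matching_number E1) (matching_number y) \<le> v \<and> v \<le> max (matching_number E1) (matching_number y)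
     \<longrightarrow> (\<exists>E. realizes dA dB E \<and> matching_number E = v)" using step(3,4) by blast
  show ?case
  proof (intro allI impI)
    fix v assume v: "min (matching_number E1) (matching_number z) \<le> v \<and> v \<le> max (matching_number E1) (matching_number z)"
    show "\<exists>E. realizes dA dB E \<and> matching_number E = v"
    proof (cases "v = matching_number z")
      case True then show ?thesis using rz by blast
    next
      case False
      then have "min (matching_number E1) (matching_number y) \<le> v \<and> v \<le> max (matching_number E1) (matching_number y)"
        using v d1 d2 by (auto simp: min_def max_def split: if_splits)
      then show ?thesis using IH by blast
    qed
  qed
qed

theorem theorem4:
  fixes dA dB :: "nat list" and E1 E2 :: "(nat \<times> nat) set" and \<nu>min \<nu>max \<nu> :: nat
  assumes "bip_degree_sequence dA dB"
    and "realizes dA dB E1" and "matching_number E1 = \<nu>min"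
    and "realizes dA dB E2" and "matching_number E2 = \<nu>max"
    and "\<nu>min \<le> \<nu>" and "\<nu> \<le> \<nu>max"
  shows "\<exists>E. realizes dA dB E \<and> matching_number E = \<nu>"
proof -
  have "sw\<^sup>*\<^sup>* E1 E2" using conn[OF assms(2,4), of 0] by simp
  from ivt[OF this assms(2)] show ?thesis using assms(3,5,6,7) by auto
qed

end
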